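(* The logic $\mathsf{F}(\mathrm{LTL}[\mathsf{O}])$ can be exponentially more succinct than $\mathrm{LTL}[\mathsf{X},\mathsf{wX},\mathsf{F},\mathsf{G}]$ (over finite traces). That is, there exist finite sets of atomic propositions $AP_n$ and languages $\mathcal{L}_n \subseteq (2^{AP_n})^+$, $n \geq 1$, such that for every $n\ge 1$: (i) there is a formula $\phi \in \mathsf{F}(\mathrm{LTL}[\mathsf{O}])$ with $\mathcal{L}(\phi)=\mathcal{L}_n$ and $\mathrm{size}(\phi)$ bounded by a polynomial in $n$; and (ii) every formula $\psi\in \mathrm{LTL}[\mathsf{X},\mathsf{wX},\mathsf{F},\mathsf{G}]$ with $\mathcal{L}(\psi)=\mathcal{L}_n$ has $\mathrm{size}(\psi) \in 2^{\Omega(n)}$.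
   Context: Let $AP$ be a finite set of atomic propositions and $\Sigma=2^{AP}$. Formulae (in negation normal form) are generated by $\phi ::= p \mid \neg p \mid \phi\lor\phi\mid\phi\land\phi\mid \mathsf{X}\phi\mid\mathsf{wX}\phi\mid\mathsf{F}\phi\mid\mathsf{G}\phi\mid\mathsf{Y}\phi\mid\mathsf{wY}\phi\mid\mathsf{O}\phi\mid\mathsf{H}\phi$ with $p\in AP$. For a finite non-empty trace $\sigma=w_0\cdots w_m\in\Sigma^+$ (so $|\sigma|=m+1$, $\sigma[i]=w_i$) and a position $0\le i<|\sigma|$: $\sigma,i\models p$ iff $p\in\sigma[i]$; $\sigma,i\models\neg p$ iff $p\notin\sigma[i]$; $\lor,\land$ as usual; $\sigma,i\models\mathsf{X}\phi$ iff $i+1<|\sigma|$ and $\sigma,i+1\models\phi$; $\sigma,i\models\mathsf{wX}\phi$ iff $i+1=|\sigma|$ or $\sigma,i+1\models\phi$; $\sigma,i\models\mathsf{F}\phi$ iff $\sigma,j\models\phi$ for some $i\le j<|\sigma|$; $\sigma,i\models\mathsf{G}\phi$ iff $\sigma,j\models\phi$ for all $i\le j<|\sigma|$; $\sigma,i\models\mathsf{Y}\phi$ iff $i>0$ and $\sigma,i-1\models\phi$; $\sigma,i\models\mathsf{wY}\phi$ iff $i=0$ or $\sigma,i-1\models\phi$; $\sigma,i\models\mathsf{O}\phi$ iff $\sigma,j\models\phi$ for some $0\le j\le i$; $\sigma,i\models\mathsf{H}\phi$ iff $\sigma,j\models\phi$ for all $0\le j\le i$. $\sigma\models\phi$ means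 $\sigma,0\models\phi$, and $\mathcal{L}(\phi)=\{\sigma\in\Sigma^+:\sigma\models\phi\}$. Size: $\mathrm{size}(p)=\mathrm{size}(\neg p)=1$, $\mathrm{size}(\circ\phi)=\mathrm{size}(\phi)+1$ for each unary temporal operator $\circ$, $\mathrm{size}(\phi_1\circ\phi_2)=\mathrm{size}(\phi_1)+\mathrm{size}(\phi_2)+1$ for $\circ\in\{\land,\lor\}$. For a set $S$ of temporal operators, $\mathrm{LTL}[S]$ is the set of formulae all of whose temporal operators lie in $S$, and $\mathsf{F}(\mathrm{LTL}[S])$ is the set of formulae of the form $\mathsf{F}(\alpha)$ with $\alpha\in\mathrm{LTL}[S]$. *)

theory Defs
  imports Complex_Main
begin

datatype 'a ltl =
    Prop 'a | NProp 'a
  | Or "'a ltl" "'a ltl" | And "'a ltl" "'a ltl"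
  | Next "'a ltl" | WNext "'a ltl" | Fin "'a ltl" | Glob "'a ltl"
  | Yest "'a ltl" | WYest "'a ltl" | Once "'a ltl" | Hist "'a ltl"

fun sat :: "'a set list \<Rightarrow> nat \<Rightarrow> 'a ltl \<Rightarrow> bool" where
  "sat \<sigma> i (Prop p) = (p \<in> \<sigma> ! i)"
| "sat \<sigma> i (NProp p) = (p \<notin> \<sigma> ! i)"
| "sat \<sigma> i (Or a b) = (sat \<sigma> i a \<or> sat \<sigma> i b)"
| "sat \<sigma> i (And a b) = (sat \<sigma> i a \<and> sat \<sigma> i b)"
| "sat \<sigma> i (Next a) = (i + 1 < length \<sigma> \<and> sat \<sigma> (i + 1) a)"
| "sat \<sigma> i (WNext a) = (i + 1 = length \<sigma> \<or> sat \<sigma> (i + 1) a)"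
| "sat \<sigma> i (Fin a) = (\<exists>j. i \<le> j \<and> j < length \<sigma> \<and> sat \<sigma> j a)"
| "sat \<sigma> i (Glob a) = (\<forall>j. i \<le> j \<and> j < length \<sigma> \<longrightarrow> sat \<sigma> j a)"
| "sat \<sigma> i (Yest a) = (i > 0 \<and> sat \<sigma> (i - 1) a)"
| "sat \<sigma> i (WYest a) = (i = 0 \<or> sat \<sigma> (i - 1) a)"
| "sat \<sigma> i (Once a) = (\<exists>j. j \<le> i \<and> sat \<sigma> j a)"
| "sat \<sigma> i (Hist a) = (\<forall>j. j \<le> i \<longrightarrow> sat \<sigma> j a)"

fun size_ltl :: "'a ltl \<Rightarrow> nat" where
  "size_ltl (Prop p) = 1"
| "size_ltl (NProp p) = 1"
| "size_ltl (Or a b) = size_ltl a + size_ltl b + 1"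
| "size_ltl (And a b) = size_ltl a + size_ltl b + 1"
| "size_ltl (Next a) = size_ltl a + 1"
| "size_ltl (WNext a) = size_ltl a + 1"
| "size_ltl (Fin a) = size_ltl a + 1"
| "size_ltl (Glob a) = size_ltl a + 1"
| "size_ltl (Yest a) = size_ltl a + 1"
| "size_ltl (WYest a) = size_ltl a + 1"
| "size_ltl (Once a) = size_ltl a + 1"
| "size_ltl (Hist a) = size_ltl a + 1"

fun atoms :: "'a ltl \<Rightarrow> 'a set" where
  "atoms (Prop p) = {p}"
| "atoms (NProp p) = {p}"
| "atoms (Or a b) = atoms a \<union> atoms b"
| "atoms (And a b) = atoms a \<union> atoms b"
| "atoms (Next a) = atoms a"
| "atoms (WNext a) = atoms a"
| "atoms (Fin a) = atoms a"
| "atoms (Glob a) = atoms a"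
| "atoms (Yest a) = atoms a"
| "atoms (WYest a) = atoms a"
| "atoms (Once a) = atoms a"
| "atoms (Hist a) = atoms a"

datatype top = OpX | OpWX | OpF | OpG | OpY | OpWY | OpO | OpH

fun tops :: "'a ltl \<Rightarrow> top set" where
  "tops (Prop p) = {}"
| "tops (NProp p) = {}"
| "tops (Or a b) = tops a \<union> tops b"
| "tops (And a b) = tops a \<union> tops b"
| "tops (Next a) = insert OpX (tops a)"
| "tops (WNext a) = insert OpWX (tops a)"
| "tops (Fin a) = insert OpF (tops a)"
| "tops (Glob a) = insert OpG (tops a)"
| "tops (Yest a) = insert OpY (tops a)"
| "tops (WYest a) = insert OpWY (tops a)"
| "tops (Once a) = insert OpO (tops a)"
| "tops (Hist a) = insert OpH (tops a)"

definition LTL_over :: "top set \<Rightarrow> 'a ltl set" where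
  "LTL_over S = {\<phi>. tops \<phi> \<subseteq> S}"

definition F_of :: "top set \<Rightarrow> 'a ltl set" where
  "F_of S = {Fin \<alpha> | \<alpha>. \<alpha> \<in> LTL_over S}"

definition traces :: "'a set \<Rightarrow> 'a set list set" where
  "traces AP = {\<sigma>. \<sigma> \<noteq> [] \<and> (\<forall>w \<in> set \<sigma>. w \<subseteq> AP)}"

definition lang :: "'a set \<Rightarrow> 'a ltl \<Rightarrow> 'a set list set" where
  "lang AP \<phi> = {\<sigma> \<in> traces AP. sat \<sigma> 0 \<phi>}"

end

theory Submission
  imports Defs
begin

definition fut :: "top set" where "fut = {OpX, OpWX, OpF, OpG}"

fun subs :: "'a ltl \<Rightarrow> 'a ltl set" where
  "subs (Prop p) = {Prop p}"
| "subs (NProp p) = {NProp p}"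
| "subs (Or a b) = insert (Or a b) (subs a \<union> subs b)"
| "subs (And a b) = insert (And a b) (subs a \<union> subs b)"
| "subs (Next a) = insert (Next a) (subs a)"
| "subs (WNext a) = insert (WNext a) (subs a)"
| "subs (Fin a) = insert (Fin a) (subs a)"
| "subs (Glob a) = insert (Glob a) (subs a)"
| "subs (Yest a) = insert (Yest a) (subs a)"
| "subs (WYest a) = insert (WYest a) (subs a)"
| "subs (Once a) = insert (Once a) (subs a)"
| "subs (Hist a) = insert (Hist a) (subs a)"

lemma subs_fin: "finite (subs \<phi>)"
  by (induction \<phi>) auto

lemma subs_self: "\<phi> \<in> subs \<phi>"
  by (cases \<phi>) auto

lemma card_subs: "card (subs \<phi>) \<le> size_ltl \<phi>"
proof (induction \<phi>)
  case (Or a b)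
  have "card (subs (Or a b)) \<le> Suc (card (subs a \<union> subs b))"
    by (simp add: card_insert_le_m1 card_insert_if subs_fin)
  also have "\<dots> \<le> Suc (card (subs a) + card (subs b))" using card_Un_le by auto
  finally show ?case using Or by simp
next
  case (And a b)
  have "card (subs (And a b)) \<le> Suc (card (subs a \<union> subs b))"
    by (simp add: card_insert_if subs_fin)
  also have "\<dots> \<le> Suc (card (subs a) + card (subs b))" using card_Un_le by auto
  finally show ?case using And by simp
qed (auto simp: card_insert_if subs_fin)

fun E :: "'a set \<Rightarrow> ('a ltl \<Rightarrow> bool) \<Rightarrow> 'a ltl \<Rightarrow> bool" where
  "E a P (Prop p) = (p \<in> a)"
| "E a P (NProp p) = (p \<notin> a)"
| "E a P (Or x y) = (E a P x \<or> E a P y)"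
| "E a P (And x y) = (E a P x \<and> E a P y)"
| "E a P (Next x) = P x"
| "E a P (WNext x) = P x"
| "E a P (Fin x) = (E a P x \<or> P (Fin x))"
| "E a P (Glob x) = (E a P x \<and> P (Glob x))"
| "E a P _ = False"

lemma E_cong: "(\<And>c. c \<in> subs \<phi> \<Longrightarrow> P c = P' c) \<Longrightarrow> E a P \<phi> = E a P' \<phi>"
  by (induction \<phi>) (auto simp: subs_self)

lemma sat_shift: "tops \<phi> \<subseteq> fut \<Longrightarrow> sat (a # v) (Suc i) \<phi> = sat v i \<phi>"
proof (induction \<phi> arbitrary: i)
  case (Fin x)
  then have "\<And>j. sat (a # v) (Suc j) x = sat v j x" by (auto simp: fut_def)
  then show ?case
    apply simp
    apply (rule iffI)
     apply (metis Suc_le_D Suc_le_mono Suc_less_eq)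
    by (metis Suc_le_mono Suc_less_eq)
next
  case (Glob x)
  then have "\<And>j. sat (a # v) (Suc j) x = sat v j x" by (auto simp: fut_def)
  then show ?case
    apply simp
    apply (rule iffI)
     apply (metis Suc_le_mono Suc_less_eq)
    by (metis Suc_le_D Suc_le_mono Suc_less_eq)
qed (auto simp: fut_def)

lemma sat_E: "tops \<phi> \<subseteq> fut \<Longrightarrow> v \<noteq> [] \<Longrightarrow> sat (a # v) 0 \<phi> = E a (sat v 0) \<phi>"
proof (induction \<phi>)
  case (Next x)
  then show ?case using sat_shift[of x a v 0] by (auto simp: fut_def)
next
  case (WNext x)
  then show ?case using sat_shift[of x a v 0] by (auto simp: fut_def)
next
  case (Fin x)
  have sh: "\<And>j. sat (a # v) (Suc j) x = sat v j x" using Fin.prems sat_shift[of x a v] by (simp add: fut_def)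
  have "sat (a # v) 0 (Fin x) = (sat (a # v) 0 x \<or> (\<exists>j. j < length v \<and> sat v j x))"
    apply simp
    apply (rule iffI)
     apply (metis Suc_less_eq le0 not0_implies_Suc sh)
    using Suc_less_eq sh by blast
  then show ?case using Fin by (auto simp: fut_def)
next
  case (Glob x)
  have sh: "\<And>j. sat (a # v) (Suc j) x = sat v j x" using Glob.prems sat_shift[of x a v] by (simp add: fut_def)
  have "sat (a # v) 0 (Glob x) = (sat (a # v) 0 x \<and> (\<forall>j. j < length v \<longrightarrow> sat v j x))"
    apply simp
    apply (rule iffI)
     using Suc_less_eq sh apply auto[1]
    by (metis Suc_less_eq not0_implies_Suc sh)
  then show ?case using Glob by (auto simp: fut_def)
qed (auto simp: fut_def)


definition enc :: "nat \<Rightarrow> nat set \<Rightarrow> nat set" where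
  "enc n T = (\<lambda>k. 2*k) ` (T \<inter> {..<n}) \<union> (\<lambda>k. 2*k+1) ` ({..<n} - T)"

definition Cf :: "nat \<Rightarrow> nat \<Rightarrow> nat ltl" where
  "Cf m k = Or (And (Prop (2*k)) (Once (And (Prop (2*k)) (NProp (2*m)))))
                (And (Prop (2*k+1)) (Once (And (Prop (2*k+1)) (NProp (2*m)))))"

fun B :: "nat \<Rightarrow> nat \<Rightarrow> nat ltl" where
  "B m 0 = Prop (2*m)"
| "B m (Suc k) = And (Cf m k) (B m k)"

definition phi :: "nat \<Rightarrow> nat ltl" where "phi n = Fin (B n n)"

definition APn :: "nat \<Rightarrow> nat set" where "APn n = {..2*n}"

definition Ln :: "nat \<Rightarrow> nat set list set" where "Ln n = lang (APn n) (phi n)"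

definition vF :: "nat \<Rightarrow> nat set set \<Rightarrow> nat set list" where
  "vF n F = map (\<lambda>S. insert (2*n) (enc n S)) (SOME xs. set xs = F) @ [{}]"

lemma B_sat: "sat \<sigma> j (B m k) = ((2*m) \<in> \<sigma>!j \<and> (\<forall>i<k. sat \<sigma> j (Cf m i)))"
  by (induction k) (auto simp: less_Suc_eq)

lemma B_tops: "tops (B m k) \<subseteq> {OpO}"
  by (induction k) (auto simp: Cf_def)

lemma B_atoms: "atoms (B m k) \<subseteq> {..2*m}" if "k \<le> m"
  using that by (induction k) (auto simp: Cf_def)

lemma B_size: "size_ltl (B m k) = 14 * k + 1"
  by (induction k) (auto simp: Cf_def)

lemma enc_even: "k < n \<Longrightarrow> (2*k \<in> enc n T) = (k \<in> T)"
  unfolding enc_def image_iff by (auto, presburger)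

lemma enc_odd: "k < n \<Longrightarrow> (2*k+1 \<in> enc n T) = (k \<notin> T)"
  unfolding enc_def image_iff by (auto, presburger)

lemma enc_noq: "2*n \<notin> enc n T"
  unfolding enc_def image_iff by auto

lemma enc_sub: "enc n T \<subseteq> {..2*n}"
  unfolding enc_def by auto

lemma mem_L:
  assumes T: "T \<subseteq> {..<n}" and F: "F \<subseteq> Pow {..<n}"
  shows "(enc n T # vF n F \<in> Ln n) = (T \<in> F)"
proof -
  have "finite F" using F by (meson finite_Pow_iff finite_lessThan finite_subset)
  then obtain xs where xs: "set xs = F" using finite_list by blast
  define ys where "ys = (SOME xs. set xs = F)"
  have ys: "set ys = F" unfolding ys_def using xs by (rule someI)
  define f where "f = (\<lambda>S. insert (2*n) (enc n S))"
  define \<sigma> where "\<sigma> = enc n T # map f ys @ [{}]"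
  have sig: "enc n T # vF n F = \<sigma>" unfolding \<sigma>_def vF_def ys_def f_def by simp
  have tr: "\<sigma> \<in> traces (APn n)"
    unfolding traces_def \<sigma>_def APn_def f_def using enc_sub by auto
  have len: "length \<sigma> = length ys + 2" unfolding \<sigma>_def by simp
  have s0: "\<sigma> ! 0 = enc n T" unfolding \<sigma>_def by simp
  have sS: "\<And>i. i < length ys \<Longrightarrow> \<sigma> ! Suc i = f (ys ! i)" unfolding \<sigma>_def by (simp add: nth_append)
  have sL: "\<sigma> ! Suc (length ys) = {}" unfolding \<sigma>_def by (simp add: nth_append)
  have qpos: "\<exists>i<length ys. j = Suc i" if "j < length \<sigma>" "2*n \<in> \<sigma>!j" for j
  proof (cases j)
    case 0 then show ?thesis using that s0 enc_noq by auto
  next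
    case (Suc i)
    then have "i \<le> length ys" using that len by auto
    then show ?thesis using Suc that sL by (cases "i = length ys") auto
  qed
  have Ck: "sat \<sigma> (Suc i) (Cf n k) = (k \<in> ys!i \<longleftrightarrow> k \<in> T)" if i: "i < length ys" and k: "k < n" for i k
  proof -
    have past: "(\<exists>i'\<le>Suc i. p \<in> \<sigma>!i' \<and> 2*n \<notin> \<sigma>!i') = (p \<in> enc n T)" for p
    proof
      assume "\<exists>i'\<le>Suc i. p \<in> \<sigma>!i' \<and> 2*n \<notin> \<sigma>!i'"
      then obtain i' where i': "i' \<le> Suc i" "p \<in> \<sigma>!i'" "2*n \<notin> \<sigma>!i'" by blast
      show "p \<in> enc n T"
      proof (cases i')
        case 0 then show ?thesis using i' s0 by simp
      next
        case (Suc i'')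
        then have "i'' < length ys" using i' i by simp
        then show ?thesis using i' Suc sS f_def by simp
      qed
    next
      assume "p \<in> enc n T" then show "\<exists>i'\<le>Suc i. p \<in> \<sigma>!i' \<and> 2*n \<notin> \<sigma>!i'"
        using s0 enc_noq by (intro exI[of _ 0]) auto
    qed
    have "2*k \<noteq> 2*n" "2*k+1 \<noteq> 2*n" using k by auto
    then show ?thesis
      unfolding Cf_def using past[of "2*k"] past[of "2*k+1"] sS[OF i] f_def enc_even[OF k] enc_odd[OF k]
      by auto
  qed
  have "(\<sigma> \<in> Ln n) = (\<exists>j<length \<sigma>. sat \<sigma> j (B n n))"
    using tr unfolding Ln_def lang_def phi_def by simp
  also have "\<dots> = (\<exists>i<length ys. \<forall>k<n. (k \<in> ys!i \<longleftrightarrow> k \<in> T))"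
  proof
    assume "\<exists>j<length \<sigma>. sat \<sigma> j (B n n)"
    then obtain j where j: "j < length \<sigma>" "sat \<sigma> j (B n n)" by blast
    then obtain i where i: "i < length ys" "j = Suc i" using qpos B_sat by blast
    then show "\<exists>i<length ys. \<forall>k<n. (k \<in> ys!i \<longleftrightarrow> k \<in> T)" using j B_sat Ck by blast
  next
    assume "\<exists>i<length ys. \<forall>k<n. (k \<in> ys!i \<longleftrightarrow> k \<in> T)"
    then obtain i where i: "i < length ys" "\<forall>k<n. (k \<in> ys!i \<longleftrightarrow> k \<in> T)" by blast
    have "sat \<sigma> (Suc i) (B n n)" unfolding B_sat using i Ck sS f_def by auto
    moreover have "Suc i < length \<sigma>" using i len by simp
    ultimately show "\<exists>j<length \<sigma>. sat \<sigma> j (B n n)" by blast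
  qed
  also have "\<dots> = (T \<in> F)"
  proof
    assume "\<exists>i<length ys. \<forall>k<n. (k \<in> ys!i \<longleftrightarrow> k \<in> T)"
    then obtain i where i: "i < length ys" "\<forall>k<n. (k \<in> ys!i \<longleftrightarrow> k \<in> T)" by blast
    have "ys!i \<in> F" using i ys nth_mem by blast
    then have "ys!i \<subseteq> {..<n}" using F by blast
    then have "ys!i = T" using i T by blast
    then show "T \<in> F" using \<open>ys!i \<in> F\<close> by simp
  next
    assume "T \<in> F"
    then obtain i where "i < length ys" "ys!i = T" using ys by (metis in_set_conv_nth)
    then show "\<exists>i<length ys. \<forall>k<n. (k \<in> ys!i \<longleftrightarrow> k \<in> T)" by blast
  qed
  finally show ?thesis using sig by simp
qed


lemma vF_tr: "enc n T # vF n F \<in> traces (APn n)"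
  unfolding traces_def vF_def APn_def using enc_sub by auto

lemma vF_ne: "vF n F \<noteq> []"
  unfolding vF_def by simp

lemma lower:
  assumes fut: "tops \<psi> \<subseteq> fut" and L: "lang (APn n) \<psi> = Ln n"
  shows "2 ^ n \<le> size_ltl \<psi>"
proof -
  define K where "K F = {\<chi> \<in> subs \<psi>. sat (vF n F) 0 \<chi>}" for F
  have key: "(T \<in> F) = E (enc n T) (sat (vF n F) 0) \<psi>"
    if "T \<subseteq> {..<n}" "F \<subseteq> Pow {..<n}" for T F
  proof -
    have "(T \<in> F) = (enc n T # vF n F \<in> Ln n)" using mem_L that by simp
    also have "\<dots> = sat (enc n T # vF n F) 0 \<psi>" using L vF_tr unfolding lang_def by blast
    also have "\<dots> = E (enc n T) (sat (vF n F) 0) \<psi>" using sat_E[OF fut vF_ne] by simp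
    finally show ?thesis .
  qed
  have inj: "inj_on K (Pow (Pow {..<n}))"
  proof (rule inj_onI)
    fix F G assume F: "F \<in> Pow (Pow {..<n})" and G: "G \<in> Pow (Pow {..<n})" and KK: "K F = K G"
    have EE: "E a (sat (vF n F) 0) \<psi> = E a (sat (vF n G) 0) \<psi>" for a
    proof (rule E_cong)
      fix c assume "c \<in> subs \<psi>"
      then show "sat (vF n F) 0 c = sat (vF n G) 0 c" using KK unfolding K_def by blast
    qed
    have "T \<in> F \<longleftrightarrow> T \<in> G" if "T \<subseteq> {..<n}" for T
      using key[OF that, of F] key[OF that, of G] EE F G by auto
    then show "F = G" using F G by blast
  qed
  have sub: "K ` Pow (Pow {..<n}) \<subseteq> Pow (subs \<psi>)" unfolding K_def by auto
  have "(2::nat) ^ (2 ^ n) = card (K ` Pow (Pow {..<n}))"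
    using card_image[OF inj] by (simp add: card_Pow)
  also have "\<dots> \<le> card (Pow (subs \<psi>))"
    using sub by (intro card_mono) (auto simp: subs_fin)
  also have "\<dots> = 2 ^ card (subs \<psi>)" by (simp add: card_Pow subs_fin)
  finally have "2 ^ n \<le> card (subs \<psi>)" by simp
  then show ?thesis using card_subs[of \<psi>] by linarith
qed

theorem theorem1:
  shows "\<exists>(AP :: nat \<Rightarrow> nat set) (L :: nat \<Rightarrow> nat set list set).
    (\<forall>n\<ge>1. finite (AP n) \<and> L n \<subseteq> traces (AP n)) \<and>
    (\<exists>c k :: nat. \<forall>n\<ge>1. \<exists>\<phi>. \<phi> \<in> F_of {OpO} \<and> atoms \<phi> \<subseteq> AP n \<and>
        lang (AP n) \<phi> = L n \<and> size_ltl \<phi> \<le> c * n ^ k + c) \<and>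
    (\<exists>(d :: real) N. d > 0 \<and> (\<forall>n\<ge>N. \<forall>\<psi>. \<psi> \<in> LTL_over {OpX, OpWX, OpF, OpG} \<and>
        atoms \<psi> \<subseteq> AP n \<and> lang (AP n) \<psi> = L n \<longrightarrow> real (size_ltl \<psi>) \<ge> 2 powr (d * real n)))"
proof (intro exI conjI)
  show "\<forall>n\<ge>1. finite (APn n) \<and> Ln n \<subseteq> traces (APn n)"
    unfolding APn_def Ln_def lang_def by auto
  show "\<forall>n\<ge>1. \<exists>\<phi>. \<phi> \<in> F_of {OpO} \<and> atoms \<phi> \<subseteq> APn n \<and>
        lang (APn n) \<phi> = Ln n \<and> size_ltl \<phi> \<le> 14 * n ^ 1 + 14"
  proof (intro allI impI exI conjI)
    fix n :: nat
    show "phi n \<in> F_of {OpO}" unfolding phi_def F_of_def LTL_over_def using B_tops by blast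
    show "atoms (phi n) \<subseteq> APn n" unfolding phi_def APn_def using B_atoms[of n n] by simp
    show "lang (APn n) (phi n) = Ln n" unfolding Ln_def ..
    show "size_ltl (phi n) \<le> 14 * n ^ 1 + 14" unfolding phi_def by (simp add: B_size)
  qed
  show "(1::real) > 0" by simp
  show "\<forall>n\<ge>1. \<forall>\<psi>. \<psi> \<in> LTL_over {OpX, OpWX, OpF, OpG} \<and>
        atoms \<psi> \<subseteq> APn n \<and> lang (APn n) \<psi> = Ln n \<longrightarrow> real (size_ltl \<psi>) \<ge> 2 powr (1 * real n)"
  proof (intro allI impI)
    fix n :: nat and \<psi> :: "nat ltl"
    assume "\<psi> \<in> LTL_over {OpX, OpWX, OpF, OpG} \<and> atoms \<psi> \<subseteq> APn n \<and> lang (APn n) \<psi> = Ln n"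
    then have "2 ^ n \<le> size_ltl \<psi>" using lower unfolding LTL_over_def fut_def by blast
    then have "real (2 ^ n) \<le> real (size_ltl \<psi>)" by linarith
    then show "real (size_ltl \<psi>) \<ge> 2 powr (1 * real n)" by (simp add: powr_realpow)
  qed
qed

end
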